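(* Let $\{X_n\}_{n\in\mathbb N}$ be a sequence of finite metric spaces with $|X_n|\to\infty$ as $n\to\infty$. Let $X=\bigsqcup_{n\in\mathbb N}X_n$ be a coarse disjoint union, and let $P_X$ be the averaging projection of the sequence $\{X_n\}_{n\in\mathbb N}$. Then $P_X$ is quasi-local if and only if $$0=\lim_{R\to+\infty}\sup\left\{\frac{|A||B|}{|X_n|^2}:\ n\in\mathbb N,\ A,B\subseteq X_n,\ d(A,B)\geq R\right\}.$$
   Context: A coarse disjoint union of finite metric spaces $(X_n,d_n)$ is the set $X=\bigsqcup_n X_n$ with a metric $d$ that restricts to $d_n$ on each $X_n$ and satisfies $d(X_n,X_m)\to\infty$ as $n+m\to\infty$ with $m\neq n$. For a finite subset $F$ of a set $Y$, $P_F\in\mathfrak B(\ell^2(Y))$ is the orthogonal projection onto the span of $\chi_F$, i.e. $(P_F)_{x,y}=1/|F|$ if $x,y\in F$ and $0$ otherwise. The averaging projection of the sequence is $P_X=\sum_n P_{X_n}$ (strong operator topology sum) on $\ell^2(X)$. For $A\subseteq X$, $\chi_A$ also denotes the multiplication operator by the characteristic function of $A$. An operator $T\in\mathfrak B(\ell^2(X))$ has $(R,\varepsilon)$-propagation if $\|\chi_AT\chi_B\|\leq\varepsilon$ for all $A,B\subseteq X$ with $d(A,B)\geq R$; $T$ is quasi-local if for every $\varepsilon>0$ there is $R>0$ such that $T$ has $(R,\varepsilon)$-propagation. $|A|$ denotes cardinality. *)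

theory Defs
  imports "HOL-Analysis.Analysis"
begin

definition metric_on :: "('a \<Rightarrow> 'a \<Rightarrow> real) \<Rightarrow> bool" where
  "metric_on d \<longleftrightarrow> (\<forall>x y. 0 \<le> d x y) \<and> (\<forall>x y. d x y = 0 \<longleftrightarrow> x = y)
     \<and> (\<forall>x y. d x y = d y x) \<and> (\<forall>x y z. d x z \<le> d x y + d y z)"

definition coarse_disjoint_union :: "('a \<Rightarrow> 'a \<Rightarrow> real) \<Rightarrow> (nat \<Rightarrow> 'a set) \<Rightarrow> bool" where
  "coarse_disjoint_union d X \<longleftrightarrow> metric_on d
     \<and> (\<forall>n. finite (X n))
     \<and> (\<forall>n m. n \<noteq> m \<longrightarrow> X n \<inter> X m = {})
     \<and> (\<Union>n. X n) = UNIV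
     \<and> (\<forall>K. \<exists>N. \<forall>n m. n \<noteq> m \<and> N \<le> n + m \<longrightarrow> (\<forall>x\<in>X n. \<forall>y\<in>X m. K \<le> d x y))"

text \<open>d(A,B) \<ge> R, where d(A,B) is the infimum of d a b over a in A, b in B
  (with the convention inf of the empty set = +infinity).\<close>
definition setdist_ge :: "('a \<Rightarrow> 'a \<Rightarrow> real) \<Rightarrow> 'a set \<Rightarrow> 'a set \<Rightarrow> real \<Rightarrow> bool" where
  "setdist_ge d A B R \<longleftrightarrow> (\<forall>a\<in>A. \<forall>b\<in>B. R \<le> d a b)"

definition is_ell2 :: "('a \<Rightarrow> complex) \<Rightarrow> bool" where
  "is_ell2 f \<longleftrightarrow> (\<lambda>x. (cmod (f x))\<^sup>2) summable_on UNIV"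

definition ell2_norm :: "('a \<Rightarrow> complex) \<Rightarrow> real" where
  "ell2_norm f = sqrt (infsum (\<lambda>x. (cmod (f x))\<^sup>2) UNIV)"

definition op_norm :: "(('a \<Rightarrow> complex) \<Rightarrow> ('a \<Rightarrow> complex)) \<Rightarrow> real" where
  "op_norm T = Sup {ell2_norm (T f) | f. is_ell2 f \<and> ell2_norm f \<le> 1}"

definition chi :: "'a set \<Rightarrow> ('a \<Rightarrow> complex) \<Rightarrow> ('a \<Rightarrow> complex)" where
  "chi A f = (\<lambda>x. if x \<in> A then f x else 0)"

definition proj_avg :: "'a set \<Rightarrow> ('a \<Rightarrow> complex) \<Rightarrow> ('a \<Rightarrow> complex)" where
  "proj_avg F f = (\<lambda>x. if x \<in> F then (\<Sum>y\<in>F. f y) / of_nat (card F) else 0)"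

text \<open>Averaging projection P_X = sum over n of P_{X_n} (the strong sum, evaluated pointwise).\<close>
definition averaging_projection :: "(nat \<Rightarrow> 'a set) \<Rightarrow> ('a \<Rightarrow> complex) \<Rightarrow> ('a \<Rightarrow> complex)" where
  "averaging_projection X f = (\<lambda>x. infsum (\<lambda>n. proj_avg (X n) f x) UNIV)"

definition has_prop :: "('a \<Rightarrow> 'a \<Rightarrow> real) \<Rightarrow> (('a \<Rightarrow> complex) \<Rightarrow> ('a \<Rightarrow> complex)) \<Rightarrow> real \<Rightarrow> real \<Rightarrow> bool" where
  "has_prop d T R \<epsilon> \<longleftrightarrow> (\<forall>A B. setdist_ge d A B R \<longrightarrow> op_norm (chi A \<circ> T \<circ> chi B) \<le> \<epsilon>)"

definition quasi_local :: "('a \<Rightarrow> 'a \<Rightarrow> real) \<Rightarrow> (('a \<Rightarrow> complex) \<Rightarrow> ('a \<Rightarrow> complex)) \<Rightarrow> bool" where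
  "quasi_local d T \<longleftrightarrow> (\<forall>\<epsilon>>0. \<exists>R>0. has_prop d T R \<epsilon>)"

end

theory Submission
  imports Defs
begin

lemma infsum_fin_supp:
  assumes "finite S" "\<And>x. x \<notin> S \<Longrightarrow> h x = 0"
  shows "infsum h UNIV = sum h S"
proof -
  have "infsum h UNIV = infsum h S"
    by (rule infsum_cong_neutral) (use assms in auto)
  also have "\<dots> = sum h S" using assms(1) by (rule infsum_finite)
  finally show ?thesis .
qed

lemma summable_fin_supp:
  assumes "finite S" "\<And>x. x \<notin> S \<Longrightarrow> h x = 0"
  shows "h summable_on UNIV"
proof -
  have "h summable_on S" using assms(1) by (rule summable_on_finite)
  then show ?thesis
    by (rule summable_on_cong_neutral[THEN iffD1, rotated -1]) (use assms in auto)
qed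

lemma avg_eval:
  assumes disj: "\<forall>n m. n \<noteq> m \<longrightarrow> X n \<inter> X m = {}" and x: "x \<in> X m"
  shows "averaging_projection X h x = (\<Sum>y\<in>X m. h y) / of_nat (card (X m))"
proof -
  have "averaging_projection X h x = sum (\<lambda>n. proj_avg (X n) h x) {m}"
    unfolding averaging_projection_def
    by (rule infsum_fin_supp) (use disj x in \<open>auto simp: proj_avg_def\<close>)
  then show ?thesis using x by (simp add: proj_avg_def)
qed

lemma cs_complex:
  fixes f :: "'a \<Rightarrow> complex"
  shows "(cmod (sum f S))\<^sup>2 \<le> real (card S) * (\<Sum>y\<in>S. (cmod (f y))\<^sup>2)"
proof -
  have "cmod (sum f S) \<le> (\<Sum>y\<in>S. cmod (f y))" by (rule norm_sum)
  then have "(cmod (sum f S))\<^sup>2 \<le> (\<Sum>y\<in>S. cmod (f y))\<^sup>2"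
    by (simp add: power_mono)
  also have "\<dots> \<le> (\<Sum>y\<in>S. (cmod (f y))\<^sup>2) * real (card S)"
    by (rule sum_squared_le_sum_of_squares)
  finally show ?thesis by (simp add: mult.commute)
qed

lemma g_eval:
  assumes fin: "finite (X m)" and disj: "\<forall>n m. n \<noteq> m \<longrightarrow> X n \<inter> X m = {}" and x: "x \<in> X m"
  shows "(chi A \<circ> averaging_projection X \<circ> chi B) f x =
     (if x \<in> A then (\<Sum>y\<in>X m \<inter> B. f y) / of_nat (card (X m)) else 0)"
proof -
  have "(\<Sum>y\<in>X m. chi B f y) = (\<Sum>y\<in>X m \<inter> B. f y)"
    using sum.inter_restrict[OF fin, of f B] by (simp add: chi_def)
  then show ?thesis using avg_eval[OF disj x, of "chi B f"] by (simp add: chi_def)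
qed

lemma piece_bound:
  fixes f :: "'a \<Rightarrow> complex"
  assumes fin: "finite (X m)" and disj: "\<forall>n m. n \<noteq> m \<longrightarrow> X n \<inter> X m = {}"
    and c: "c \<ge> 0" and hc: "real (card (A \<inter> X m) * card (B \<inter> X m)) \<le> c * (real (card (X m)))\<^sup>2"
  shows "(\<Sum>x\<in>X m. (cmod ((chi A \<circ> averaging_projection X \<circ> chi B) f x))\<^sup>2)
       \<le> c * (\<Sum>x\<in>X m. (cmod (f x))\<^sup>2)"
proof -
  define s where "s = (\<Sum>y\<in>X m \<inter> B. f y)"
  define k where "k = real (card (X m))"
  have q0: "0 \<le> (\<Sum>x\<in>X m. (cmod (f x))\<^sup>2)" by (simp add: sum_nonneg)
  have "(\<Sum>x\<in>X m. (cmod ((chi A \<circ> averaging_projection X \<circ> chi B) f x))\<^sup>2)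
      = (\<Sum>x\<in>X m. if x \<in> A then (cmod s)\<^sup>2 / k\<^sup>2 else 0)"
  proof (rule sum.cong)
    fix x assume "x \<in> X m"
    from g_eval[OF fin disj this, of A B f] show
      "(cmod ((chi A \<circ> averaging_projection X \<circ> chi B) f x))\<^sup>2 = (if x \<in> A then (cmod s)\<^sup>2 / k\<^sup>2 else 0)"
      by (simp add: s_def k_def norm_divide power_divide)
  qed simp
  also have "\<dots> = real (card (X m \<inter> A)) * ((cmod s)\<^sup>2 / k\<^sup>2)"
    using sum.inter_restrict[OF fin, of "\<lambda>_. (cmod s)\<^sup>2 / k\<^sup>2" A] by simp
  finally have eq: "(\<Sum>x\<in>X m. (cmod ((chi A \<circ> averaging_projection X \<circ> chi B) f x))\<^sup>2)
      = real (card (X m \<inter> A)) * ((cmod s)\<^sup>2 / k\<^sup>2)" .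
  have cs: "(cmod s)\<^sup>2 \<le> real (card (X m \<inter> B)) * (\<Sum>x\<in>X m. (cmod (f x))\<^sup>2)"
  proof -
    have "(cmod s)\<^sup>2 \<le> real (card (X m \<inter> B)) * (\<Sum>x\<in>X m \<inter> B. (cmod (f x))\<^sup>2)"
      unfolding s_def by (rule cs_complex)
    also have "\<dots> \<le> real (card (X m \<inter> B)) * (\<Sum>x\<in>X m. (cmod (f x))\<^sup>2)"
      by (intro mult_left_mono sum_mono2) (use fin in auto)
    finally show ?thesis .
  qed
  show ?thesis
  proof (cases "k = 0")
    case True
    then show ?thesis using eq q0 c by simp
  next
    case False
    then have kp: "k\<^sup>2 > 0" by simp
    have "real (card (X m \<inter> A)) * ((cmod s)\<^sup>2 / k\<^sup>2)
        \<le> real (card (X m \<inter> A)) * (real (card (X m \<inter> B)) * (\<Sum>x\<in>X m. (cmod (f x))\<^sup>2) / k\<^sup>2)"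
      by (intro mult_left_mono divide_right_mono cs) auto
    also have "\<dots> = real (card (A \<inter> X m) * card (B \<inter> X m)) * (\<Sum>x\<in>X m. (cmod (f x))\<^sup>2) / k\<^sup>2"
      by (simp add: Int_commute)
    also have "\<dots> \<le> c * k\<^sup>2 * (\<Sum>x\<in>X m. (cmod (f x))\<^sup>2) / k\<^sup>2"
      by (intro divide_right_mono mult_right_mono q0) (use hc k_def in auto)
    also have "\<dots> = c * (\<Sum>x\<in>X m. (cmod (f x))\<^sup>2)" using kp by simp
    finally show ?thesis using eq by simp
  qed
qed

lemma upper_infsum:
  fixes f :: "'a \<Rightarrow> complex"
  assumes fin: "\<forall>n. finite (X n)" and disj: "\<forall>n m. n \<noteq> m \<longrightarrow> X n \<inter> X m = {}"
    and cov: "(\<Union>n. X n) = UNIV"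
    and c: "c \<ge> 0" and hc: "\<forall>n. real (card (A \<inter> X n) * card (B \<inter> X n)) \<le> c * (real (card (X n)))\<^sup>2"
    and f: "is_ell2 f"
  shows "infsum (\<lambda>x. (cmod ((chi A \<circ> averaging_projection X \<circ> chi B) f x))\<^sup>2) UNIV
       \<le> c * infsum (\<lambda>x. (cmod (f x))\<^sup>2) UNIV"
proof -
  define h where "h = (\<lambda>x. (cmod ((chi A \<circ> averaging_projection X \<circ> chi B) f x))\<^sup>2)"
  define q where "q = (\<lambda>x. (cmod (f x))\<^sup>2)"
  have qs: "q summable_on UNIV" using f by (simp add: is_ell2_def q_def)
  have I0: "0 \<le> infsum q UNIV" by (rule infsum_nonneg) (simp add: q_def)
  obtain idx where idx: "\<And>x. x \<in> X (idx x)"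
    using cov by (metis UNIV_I UN_E)
  have key: "sum h F \<le> c * infsum q UNIV" if F: "finite F" for F
  proof -
    define N where "N = idx ` F"
    define U where "U = (\<Union>n\<in>N. X n)"
    have finN: "finite N" using F by (simp add: N_def)
    have finU: "finite U" using finN fin by (simp add: U_def)
    have FU: "F \<subseteq> U" using idx by (auto simp: U_def N_def)
    have "sum h F \<le> sum h U"
      by (rule sum_mono2[OF finU FU]) (simp add: h_def)
    also have "sum h U = (\<Sum>n\<in>N. sum h (X n))"
      unfolding U_def by (rule sum.UNION_disjoint) (use finN fin disj in auto)
    also have "\<dots> \<le> (\<Sum>n\<in>N. c * sum q (X n))"
      by (rule sum_mono) (unfold h_def q_def, rule piece_bound, use fin disj c hc in auto)
    also have "\<dots> = c * sum q U"
      unfolding U_def sum_distrib_left[symmetric]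
      by (subst sum.UNION_disjoint) (use finN fin disj in auto)
    also have "\<dots> \<le> c * infsum q UNIV"
      by (intro mult_left_mono c finite_sum_le_infsum qs finU) (auto simp: q_def)
    finally show ?thesis .
  qed
  show ?thesis
  proof (cases "h summable_on UNIV")
    case True
    then have "infsum h UNIV \<le> c * infsum q UNIV"
      by (rule infsum_le_finite_sums) (use key in auto)
    then show ?thesis by (simp add: h_def q_def)
  next
    case False
    then show ?thesis using infsum_not_exists[OF False] I0 c
      by (simp add: h_def q_def)
  qed
qed

lemma upper_norm:
  fixes f :: "'a \<Rightarrow> complex"
  assumes fin: "\<forall>n. finite (X n)" and disj: "\<forall>n m. n \<noteq> m \<longrightarrow> X n \<inter> X m = {}"
    and cov: "(\<Union>n. X n) = UNIV"
    and c: "c \<ge> 0" and hc: "\<forall>n. real (card (A \<inter> X n) * card (B \<inter> X n)) \<le> c * (real (card (X n)))\<^sup>2"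
    and f: "is_ell2 f" "ell2_norm f \<le> 1"
  shows "ell2_norm ((chi A \<circ> averaging_projection X \<circ> chi B) f) \<le> sqrt c"
proof -
  have I0: "0 \<le> infsum (\<lambda>x. (cmod (f x))\<^sup>2) UNIV" by (rule infsum_nonneg) simp
  have I1: "infsum (\<lambda>x. (cmod (f x))\<^sup>2) UNIV \<le> 1"
    using f(2) I0 unfolding ell2_norm_def by (metis real_sqrt_le_1_iff)
  have "ell2_norm ((chi A \<circ> averaging_projection X \<circ> chi B) f)
      \<le> sqrt (c * infsum (\<lambda>x. (cmod (f x))\<^sup>2) UNIV)"
    unfolding ell2_norm_def
    using upper_infsum[OF fin disj cov c hc f(1)] by (simp only: real_sqrt_le_iff)
  also have "\<dots> \<le> sqrt c"
    using I1 c by (simp add: mult_left_le)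
  finally show ?thesis .
qed

lemma upper_op:
  assumes fin: "\<forall>n. finite (X n)" and disj: "\<forall>n m. n \<noteq> m \<longrightarrow> X n \<inter> X m = {}"
    and cov: "(\<Union>n. X n) = UNIV"
    and c: "c \<ge> 0" and hc: "\<forall>n. real (card (A \<inter> X n) * card (B \<inter> X n)) \<le> c * (real (card (X n)))\<^sup>2"
  shows "op_norm (chi A \<circ> averaging_projection X \<circ> chi B) \<le> sqrt c"
    and "bdd_above {ell2_norm ((chi A \<circ> averaging_projection X \<circ> chi B) f) | f. is_ell2 f \<and> ell2_norm f \<le> 1}"
proof -
  have ne: "{ell2_norm ((chi A \<circ> averaging_projection X \<circ> chi B) f) | f. is_ell2 f \<and> ell2_norm f \<le> 1} \<noteq> {}"
  proof -
    have "is_ell2 (\<lambda>_. 0::complex)" unfolding is_ell2_def by simp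
    moreover have "ell2_norm (\<lambda>_. 0::complex) \<le> 1" unfolding ell2_norm_def by simp
    ultimately show ?thesis by blast
  qed
  have bd: "\<And>y. y \<in> {ell2_norm ((chi A \<circ> averaging_projection X \<circ> chi B) f) | f. is_ell2 f \<and> ell2_norm f \<le> 1} \<Longrightarrow> y \<le> sqrt c"
    using upper_norm[OF fin disj cov c hc] by blast
  show "op_norm (chi A \<circ> averaging_projection X \<circ> chi B) \<le> sqrt c"
    unfolding op_norm_def by (rule cSup_least[OF ne bd])
  show "bdd_above {ell2_norm ((chi A \<circ> averaging_projection X \<circ> chi B) f) | f. is_ell2 f \<and> ell2_norm f \<le> 1}"
    using bd by (intro bdd_aboveI[where M="sqrt c"]) blast
qed

lemma lower:
  assumes fin: "\<forall>n. finite (X n)" and disj: "\<forall>n m. n \<noteq> m \<longrightarrow> X n \<inter> X m = {}"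
    and cov: "(\<Union>n. X n) = UNIV"
    and AB: "A \<subseteq> X m" "B \<subseteq> X m"
    and op: "op_norm (chi A \<circ> averaging_projection X \<circ> chi B) \<le> \<epsilon>"
  shows "real (card A * card B) / (real (card (X m)))\<^sup>2 \<le> \<epsilon>\<^sup>2"
proof -
  have hc1: "\<forall>n. real (card (A \<inter> X n) * card (B \<inter> X n)) \<le> 1 * (real (card (X n)))\<^sup>2"
  proof
    fix n
    have "card (A \<inter> X n) \<le> card (X n)" "card (B \<inter> X n) \<le> card (X n)"
      using fin by (auto intro: card_mono)
    then have "card (A \<inter> X n) * card (B \<inter> X n) \<le> card (X n) * card (X n)"
      by (rule mult_le_mono)
    then show "real (card (A \<inter> X n) * card (B \<inter> X n)) \<le> 1 * (real (card (X n)))\<^sup>2"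
      by (simp add: power2_eq_square flip: of_nat_mult)
  qed
  note bdd = upper_op(2)[OF fin disj cov zero_le_one hc1]
  have finB: "finite B" and finA: "finite A" using AB fin finite_subset by blast+
  define b where "b = real (card B)"
  define k where "k = real (card (X m))"
  define f where "f = (\<lambda>x. if x \<in> B then complex_of_real (1 / sqrt b) else 0)"
  show ?thesis
  proof (cases "B = {}")
    case True then show ?thesis by simp
  next
    case False
    then have bp: "b > 0" using finB by (simp add: b_def card_gt_0_iff)
    have fl2: "is_ell2 f" unfolding is_ell2_def
      by (rule summable_fin_supp[OF finB]) (simp add: f_def)
    have "infsum (\<lambda>x. (cmod (f x))\<^sup>2) UNIV = (\<Sum>x\<in>B. (cmod (f x))\<^sup>2)"
      by (rule infsum_fin_supp[OF finB]) (simp add: f_def)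
    also have "\<dots> = (\<Sum>x\<in>B. 1 / b)"
      using bp by (intro sum.cong) (auto simp: f_def power_divide norm_divide)
    also have "\<dots> = 1" using bp by (simp add: b_def)
    finally have fn: "ell2_norm f = 1" by (simp add: ell2_norm_def)
    have gx: "(chi A \<circ> averaging_projection X \<circ> chi B) f x =
        (if x \<in> A then complex_of_real (sqrt b / k) else 0)" for x
    proof (cases "x \<in> A")
      case True
      then have xm: "x \<in> X m" using AB by auto
      have "(\<Sum>y\<in>X m \<inter> B. f y) = (\<Sum>y\<in>B. complex_of_real (1 / sqrt b))"
        using AB by (intro sum.cong) (auto simp: f_def)
      also have "\<dots> = complex_of_real (b * (1 / sqrt b))"
        by (simp add: b_def)
      also have "\<dots> = complex_of_real (sqrt b)" using bp
        by (metis less_eq_real_def real_div_sqrt times_divide_eq_right mult_1_right)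
      finally show ?thesis using g_eval[OF _ disj xm, of A B f] fin True by (simp add: k_def)
    next
      case False
      then show ?thesis by (simp add: chi_def)
    qed
    have "infsum (\<lambda>x. (cmod ((chi A \<circ> averaging_projection X \<circ> chi B) f x))\<^sup>2) UNIV
       = (\<Sum>x\<in>A. (cmod ((chi A \<circ> averaging_projection X \<circ> chi B) f x))\<^sup>2)"
      by (rule infsum_fin_supp[OF finA]) (simp add: chi_def)
    also have "\<dots> = (\<Sum>x\<in>A. b / k\<^sup>2)"
    proof (rule sum.cong)
      fix x assume "x \<in> A"
      then show "(cmod ((chi A \<circ> averaging_projection X \<circ> chi B) f x))\<^sup>2 = b / k\<^sup>2"
        using gx[of x] bp by (simp only:) (simp add: power_divide norm_divide)
    qed simp
    also have "\<dots> = real (card A * card B) / (real (card (X m)))\<^sup>2"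
      by (simp add: b_def k_def)
    finally have gn: "ell2_norm ((chi A \<circ> averaging_projection X \<circ> chi B) f)
        = sqrt (real (card A * card B) / (real (card (X m)))\<^sup>2)"
      by (simp add: ell2_norm_def)
    have "ell2_norm ((chi A \<circ> averaging_projection X \<circ> chi B) f) \<le> op_norm (chi A \<circ> averaging_projection X \<circ> chi B)"
      unfolding op_norm_def by (rule cSup_upper[OF _ bdd]) (use fl2 fn in auto)
    then have "sqrt (real (card A * card B) / (real (card (X m)))\<^sup>2) \<le> \<epsilon>" using op gn by simp
    moreover have v0: "0 \<le> real (card A * card B) / (real (card (X m)))\<^sup>2" by simp
    ultimately have "(sqrt (real (card A * card B) / (real (card (X m)))\<^sup>2))\<^sup>2 \<le> \<epsilon>\<^sup>2"
      by (intro power_mono) auto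
    then show ?thesis using v0 by simp
  qed
qed

definition Sset :: "('a \<Rightarrow> 'a \<Rightarrow> real) \<Rightarrow> (nat \<Rightarrow> 'a set) \<Rightarrow> real \<Rightarrow> real set" where
  "Sset d X R = {real (card A * card B) / (real (card (X n)))\<^sup>2 | n A B.
         A \<subseteq> X n \<and> B \<subseteq> X n \<and> setdist_ge d A B R}"

lemma elem_le1:
  assumes "finite (X n)" "A \<subseteq> X n" "B \<subseteq> X n"
  shows "real (card A * card B) \<le> 1 * (real (card (X n)))\<^sup>2"
proof -
  have "card A \<le> card (X n)" "card B \<le> card (X n)" using assms by (auto intro: card_mono)
  then have "card A * card B \<le> card (X n) * card (X n)" by (rule mult_le_mono)
  then show ?thesis by (simp add: power2_eq_square flip: of_nat_mult)
qed

lemma elem_le_c: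
  assumes "finite (X n)" "A \<subseteq> X n" "B \<subseteq> X n"
    and "real (card A * card B) / (real (card (X n)))\<^sup>2 \<le> c" "c \<ge> 0"
  shows "real (card A * card B) \<le> c * (real (card (X n)))\<^sup>2"
proof (cases "card (X n) = 0")
  case True
  then have "card A = 0" using assms card_mono by (metis le_zero_eq)
  then show ?thesis using assms by simp
next
  case False
  then have "(real (card (X n)))\<^sup>2 > 0" by simp
  then show ?thesis using assms(4) by (simp add: pos_divide_le_eq)
qed

lemma Sset_props:
  assumes fin: "\<forall>n. finite (X n)"
  shows "0 \<in> Sset d X R" and "bdd_above (Sset d X R)" and "\<And>v. v \<in> Sset d X R \<Longrightarrow> v \<le> 1"
proof -
  have "real (card ({}::'a set) * card ({}::'a set)) / (real (card (X 0)))\<^sup>2 \<in> Sset d X R"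
    unfolding Sset_def setdist_ge_def by blast
  then show "0 \<in> Sset d X R" by simp
  show le1: "\<And>v. v \<in> Sset d X R \<Longrightarrow> v \<le> 1"
  proof -
    fix v assume "v \<in> Sset d X R"
    then obtain n A B where v: "v = real (card A * card B) / (real (card (X n)))\<^sup>2"
      and AB: "A \<subseteq> X n" "B \<subseteq> X n" unfolding Sset_def by blast
    have h: "real (card A * card B) \<le> 1 * (real (card (X n)))\<^sup>2" by (rule elem_le1[of X n A B, OF fin[rule_format] AB])
    show "v \<le> 1"
    proof (cases "card (X n) = 0")
      case True then show ?thesis using v by simp
    next
      case False then show ?thesis using v h by (simp add: divide_le_eq_1)
    qed
  qed
  then show "bdd_above (Sset d X R)" by (intro bdd_aboveI[where M=1]) blast
qed

theorem proposition3p8: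
  fixes d :: "'a \<Rightarrow> 'a \<Rightarrow> real" and X :: "nat \<Rightarrow> 'a set"
  assumes "coarse_disjoint_union d X"
    and "filterlim (\<lambda>n. card (X n)) at_top sequentially"
  shows "quasi_local d (averaging_projection X) \<longleftrightarrow>
    ((\<lambda>R::real. Sup {real (card A * card B) / (real (card (X n)))\<^sup>2 | n A B.
         A \<subseteq> X n \<and> B \<subseteq> X n \<and> setdist_ge d A B R}) \<longlongrightarrow> 0) at_top"
proof -
  have fin: "\<forall>n. finite (X n)" and disj: "\<forall>n m. n \<noteq> m \<longrightarrow> X n \<inter> X m = {}"
    and cov: "(\<Union>n. X n) = UNIV"
    using assms(1) unfolding coarse_disjoint_union_def by blast+
  define S where "S = (\<lambda>R. Sup (Sset d X R))"
  have Seq: "(\<lambda>R::real. Sup {real (card A * card B) / (real (card (X n)))\<^sup>2 | n A B.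
         A \<subseteq> X n \<and> B \<subseteq> X n \<and> setdist_ge d A B R}) = S"
    by (simp add: S_def Sset_def)
  note P = Sset_props[OF fin]
  have ne: "Sset d X R \<noteq> {}" for R using P(1) by blast
  have S0: "0 \<le> S R" for R unfolding S_def by (rule cSup_upper[OF P(1) P(2)])
  have anti: "S R' \<le> S R" if "R \<le> R'" for R R'
  proof -
    have "Sset d X R' \<subseteq> Sset d X R"
      using that unfolding Sset_def setdist_ge_def by (smt (verit) Collect_mono_iff)
    then show ?thesis unfolding S_def by (rule cSup_subset_mono[OF ne P(2)])
  qed
  have K1: "S R \<le> \<epsilon>\<^sup>2" if hp: "has_prop d (averaging_projection X) R \<epsilon>" for R \<epsilon>
    unfolding S_def
  proof (rule cSup_least[OF ne])
    fix v assume "v \<in> Sset d X R"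
    then obtain n A B where v: "v = real (card A * card B) / (real (card (X n)))\<^sup>2"
      and AB: "A \<subseteq> X n" "B \<subseteq> X n" and sd: "setdist_ge d A B R" unfolding Sset_def by blast
    have "op_norm (chi A \<circ> averaging_projection X \<circ> chi B) \<le> \<epsilon>"
      using hp sd unfolding has_prop_def by blast
    from lower[OF fin disj cov AB this] show "v \<le> \<epsilon>\<^sup>2" unfolding v .
  qed
  have K2: "has_prop d (averaging_projection X) R \<epsilon>" if e: "\<epsilon> \<ge> 0" and SR: "S R \<le> \<epsilon>\<^sup>2" for R \<epsilon>
    unfolding has_prop_def
  proof (intro allI impI)
    fix A B assume sd: "setdist_ge d A B R"
    have hc: "\<forall>n. real (card (A \<inter> X n) * card (B \<inter> X n)) \<le> S R * (real (card (X n)))\<^sup>2"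
    proof
      fix n
      have sd': "setdist_ge d (A \<inter> X n) (B \<inter> X n) R" using sd unfolding setdist_ge_def by blast
      have "real (card (A \<inter> X n) * card (B \<inter> X n)) / (real (card (X n)))\<^sup>2 \<in> Sset d X R"
        unfolding Sset_def using sd' by (intro CollectI exI[of _ n] exI[of _ "A \<inter> X n"] exI[of _ "B \<inter> X n"]) auto
      then have le: "real (card (A \<inter> X n) * card (B \<inter> X n)) / (real (card (X n)))\<^sup>2 \<le> S R"
        unfolding S_def by (rule cSup_upper[OF _ P(2)])
      show "real (card (A \<inter> X n) * card (B \<inter> X n)) \<le> S R * (real (card (X n)))\<^sup>2"
        by (rule elem_le_c[of X n "A \<inter> X n" "B \<inter> X n", OF fin[rule_format] _ _ le S0]) auto
    qed
    have "op_norm (chi A \<circ> averaging_projection X \<circ> chi B) \<le> sqrt (S R)"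
      by (rule upper_op(1)[OF fin disj cov S0 hc])
    also have "\<dots> \<le> sqrt (\<epsilon>\<^sup>2)" using SR by (rule real_sqrt_le_mono)
    also have "\<dots> = \<epsilon>" using e by simp
    finally show "op_norm (chi A \<circ> averaging_projection X \<circ> chi B) \<le> \<epsilon>" .
  qed
  show ?thesis unfolding Seq
  proof
    assume ql: "quasi_local d (averaging_projection X)"
    show "(S \<longlongrightarrow> 0) at_top"
    proof (rule tendstoI)
      fix e :: real assume ep: "e > 0"
      then have "sqrt (e/2) > 0" by simp
      then obtain R0 where "R0 > 0" "has_prop d (averaging_projection X) R0 (sqrt (e/2))"
        using ql unfolding quasi_local_def by blast
      then have "S R0 \<le> (sqrt (e/2))\<^sup>2" by (intro K1)
      then have SR0: "S R0 \<le> e/2" using ep by simp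
      show "\<forall>\<^sub>F R in at_top. dist (S R) 0 < e"
        unfolding eventually_at_top_linorder
      proof (intro exI allI impI)
        fix R assume "R0 \<le> R"
        then have "S R \<le> S R0" by (rule anti)
        then show "dist (S R) 0 < e" using SR0 S0[of R] ep by simp
      qed
    qed
  next
    assume lim: "(S \<longlongrightarrow> 0) at_top"
    show "quasi_local d (averaging_projection X)"
      unfolding quasi_local_def
    proof (intro allI impI)
      fix \<epsilon> :: real assume ep: "\<epsilon> > 0"
      then have "\<epsilon>\<^sup>2 > 0" by simp
      from tendstoD[OF lim this] obtain N where N: "\<And>R. R \<ge> N \<Longrightarrow> dist (S R) 0 < \<epsilon>\<^sup>2"
        unfolding eventually_at_top_linorder by blast
      define R where "R = max N 1"
      have "dist (S R) 0 < \<epsilon>\<^sup>2" using N by (simp add: R_def)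
      then have "S R \<le> \<epsilon>\<^sup>2" using S0[of R] by simp
      then have "has_prop d (averaging_projection X) R \<epsilon>" using ep by (intro K2) auto
      moreover have "R > 0" by (simp add: R_def)
      ultimately show "\<exists>R>0. has_prop d (averaging_projection X) R \<epsilon>" by blast
    qed
  qed
qed

end
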